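(* Let $X$ be a real Banach space and $T:X\rightrightarrows X^*$ maximal monotone. For any $h\in\mathcal{F}_T$, $$\mathrm{cl}\,P_1D(h)=\mathrm{cl}\,\mathrm{conv}\,D(T),\qquad\mathrm{cl}_{w*}P_2D(h)=\mathrm{cl}_{w*}\mathrm{conv}\,R(T).$$
   Context: An operator $T:X\rightrightarrows X^*$ is a subset of $X\times X^*$ with $D(T)=P_1T$, $R(T)=P_2T$, where $P_1,P_2$ are the canonical projections onto $X$ and $X^*$. $T$ is monotone if $\langle x-y,x^*-y^*\rangle\geq0$ for all $(x,x^* ),(y,y^* )\in T$, and maximal monotone if it is monotone and not properly contained in another monotone operator. $\mathcal{F}_T$ is the set of all convex lower semicontinuous $h:X\times X^*\to\mathbb{R}\cup\{\pm\infty\}$ with $h(x,x^* )\geq\langle x,x^*\rangle$ for all $(x,x^* )$ and $h(x,x^* )=\langle x,x^*\rangle$ on $T$. $D(h)=\{z\;|\;h(z)<\infty\}$. $\mathrm{cl}$ is norm closure in $X$, $\mathrm{cl}_{w*}$ weak-$*$ closure in $X^*$, $\mathrm{conv}$ convex hull. *)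

theory Defs
  imports "HOL-Analysis.Analysis"
begin

text \<open>The dual space X* is modelled as the type of bounded linear functionals
  'a \<Rightarrow>L real; the duality pairing is blinfun_apply.\<close>

definition pairing :: "'a::real_normed_vector \<Rightarrow> ('a \<Rightarrow>\<^sub>L real) \<Rightarrow> real" where
  "pairing x xs = blinfun_apply xs x"

definition monotone_op :: "('a::real_normed_vector \<times> ('a \<Rightarrow>\<^sub>L real)) set \<Rightarrow> bool" where
  "monotone_op T \<longleftrightarrow>
     (\<forall>(x, xs)\<in>T. \<forall>(y, ys)\<in>T. pairing (x - y) (xs - ys) \<ge> 0)"

definition maximal_monotone :: "('a::real_normed_vector \<times> ('a \<Rightarrow>\<^sub>L real)) set \<Rightarrow> bool" where
  "maximal_monotone T \<longleftrightarrow> monotone_op T \<and> (\<forall>S. monotone_op S \<and> T \<subseteq> S \<longrightarrow> S = T)"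

text \<open>Weak-* topology on X*: the coarsest topology making all evaluations continuous,
  i.e. the pullback of the product (pointwise) topology on 'a \<Rightarrow> real.\<close>

definition weak_star_topology :: "('a::real_normed_vector \<Rightarrow>\<^sub>L real) topology" where
  "weak_star_topology = pullback_topology UNIV blinfun_apply euclidean"

definition weak_star_closure :: "('a::real_normed_vector \<Rightarrow>\<^sub>L real) set \<Rightarrow> ('a \<Rightarrow>\<^sub>L real) set" where
  "weak_star_closure S = weak_star_topology closure_of S"

definition convex_ext :: "('b::real_vector \<Rightarrow> ereal) \<Rightarrow> bool" where
  "convex_ext h \<longleftrightarrow> convex {(z, t::real). h z \<le> ereal t}"

definition lsc_ext :: "('b::topological_space \<Rightarrow> ereal) \<Rightarrow> bool" where
  "lsc_ext h \<longleftrightarrow> (\<forall>c. closed {z. h z \<le> c})"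

definition fitzpatrick_family ::
  "('a::real_normed_vector \<times> ('a \<Rightarrow>\<^sub>L real)) set \<Rightarrow> (('a \<times> ('a \<Rightarrow>\<^sub>L real)) \<Rightarrow> ereal) set" where
  "fitzpatrick_family T = {h. convex_ext h \<and> lsc_ext h \<and>
      (\<forall>x xs. h (x, xs) \<ge> ereal (pairing x xs)) \<and>
      (\<forall>(x, xs)\<in>T. h (x, xs) = ereal (pairing x xs))}"

definition effdom :: "('b \<Rightarrow> ereal) \<Rightarrow> 'b set" where
  "effdom h = {z. h z < \<infinity>}"

end

theory Submission
  imports Defs
begin


definition sublin :: "('v::real_vector \<Rightarrow> real) \<Rightarrow> bool" where
  "sublin q \<longleftrightarrow> (\<forall>x y. q (x + y) \<le> q x + q y) \<and> (\<forall>c x. c > 0 \<longrightarrow> q (c *\<^sub>R x) \<le> c * q x) \<and> q 0 = 0"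

lemma sublin_add: "sublin q \<Longrightarrow> q (x + y) \<le> q x + q y" by (simp add: sublin_def)
lemma sublin_0: "sublin q \<Longrightarrow> q 0 = 0" by (simp add: sublin_def)
lemma sublin_hom:
  assumes "sublin q" "c \<ge> 0" shows "q (c *\<^sub>R x) = c * q x"
proof (cases "c = 0")
  case True then show ?thesis using assms by (simp add: sublin_def)
next
  case False
  then have c: "c > 0" using assms by simp
  have 1: "q (c *\<^sub>R x) \<le> c * q x" using assms c by (simp add: sublin_def)
  have h: "\<forall>c x. c > 0 \<longrightarrow> q (c *\<^sub>R x) \<le> c * q x" using assms(1) sublin_def by blast
  have "q ((1/c) *\<^sub>R (c *\<^sub>R x)) \<le> (1/c) * q (c *\<^sub>R x)" using h[rule_format, of "1/c" "c *\<^sub>R x"] c by simp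
  then have "q x \<le> (1/c) * q (c *\<^sub>R x)" using c by simp
  then have "c * q x \<le> q (c *\<^sub>R x)" using c by (simp add: field_simps)
  with 1 show ?thesis by simp
qed

lemma sublin_neg: "sublin q \<Longrightarrow> - q (- x) \<le> q x"
  using sublin_add[of q x "-x"] sublin_0[of q] by simp

lemma minimal_sublin_linear:
  assumes q: "sublin q" and minq: "\<And>r. sublin r \<Longrightarrow> (\<forall>x. r x \<le> q x) \<Longrightarrow> r = q"
  shows "linear q"
proof -
  have sup: "q x + q a \<le> q (x + a)" for x a
  proof -
    define S where "S x = {q (x + t *\<^sub>R a) - t * q a | t. t \<ge> 0}" for x
    define r where "r x = Inf (S x)" for x
    have ne: "q x \<in> S x" for x unfolding S_def by (rule CollectI, rule exI[of _ 0]) simp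
    have lb: "- q (- x) \<le> s" if hs: "s \<in> S x" for s x
    proof -
      obtain t where t: "t \<ge> 0" "s = q (x + t *\<^sub>R a) - t * q a" using hs unfolding S_def mem_Collect_eq by auto
      have "q (t *\<^sub>R a) \<le> q (x + t *\<^sub>R a) + q (-x)"
        using sublin_add[OF q, of "x + t *\<^sub>R a" "-x"] by simp
      then show ?thesis using t sublin_hom[OF q t(1)] by simp
    qed
    have bdd: "bdd_below (S x)" for x unfolding bdd_below_def using lb by blast
    have rle: "r x \<le> s" if "s \<in> S x" for s x unfolding r_def by (rule cInf_lower[OF that bdd])
    have rge: "c \<le> r x" if "\<And>s. s \<in> S x \<Longrightarrow> c \<le> s" for c x
      unfolding r_def by (rule cInf_greatest) (use ne that in auto)
    have "sublin r" unfolding sublin_def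
    proof (intro conjI allI impI)
      fix x y
      show "r (x + y) \<le> r x + r y"
      proof -
        have "r (x + y) - s2 \<le> s1" if hs: "s1 \<in> S x" "s2 \<in> S y" for s1 s2
        proof -
          obtain s where s: "s \<ge> 0" "s1 = q (x + s *\<^sub>R a) - s * q a" using hs unfolding S_def mem_Collect_eq by auto
          obtain t where t: "t \<ge> 0" "s2 = q (y + t *\<^sub>R a) - t * q a" using hs unfolding S_def mem_Collect_eq by auto
          have "q (x + y + (s + t) *\<^sub>R a) - (s + t) * q a \<in> S (x + y)"
            unfolding S_def using s t by auto
          then have "r (x + y) \<le> q (x + y + (s + t) *\<^sub>R a) - (s + t) * q a" by (rule rle)
          also have "x + y + (s + t) *\<^sub>R a = (x + s *\<^sub>R a) + (y + t *\<^sub>R a)" by (simp add: algebra_simps)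
          finally show ?thesis using sublin_add[OF q, of "x + s *\<^sub>R a" "y + t *\<^sub>R a"] s t
            by (simp add: algebra_simps)
        qed
        then have "r (x + y) - s2 \<le> r x" if "s2 \<in> S y" for s2 using that by (intro rge) auto
        then have "r (x + y) - r x \<le> s2" if "s2 \<in> S y" for s2 using that by force
        then have "r (x + y) - r x \<le> r y" by (intro rge) auto
        then show ?thesis by simp
      qed
    next
      fix c :: real and x assume c: "c > 0"
      have "r (c *\<^sub>R x) / c \<le> s" if hs: "s \<in> S x" for s
      proof -
        obtain t where t: "t \<ge> 0" "s = q (x + t *\<^sub>R a) - t * q a" using hs unfolding S_def mem_Collect_eq by auto
        have "q (c *\<^sub>R x + (c * t) *\<^sub>R a) - (c * t) * q a \<in> S (c *\<^sub>R x)"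
          unfolding S_def using t c by auto
        then have "r (c *\<^sub>R x) \<le> q (c *\<^sub>R x + (c * t) *\<^sub>R a) - (c * t) * q a" by (rule rle)
        also have "c *\<^sub>R x + (c * t) *\<^sub>R a = c *\<^sub>R (x + t *\<^sub>R a)" by (simp add: algebra_simps)
        also have "q (c *\<^sub>R (x + t *\<^sub>R a)) = c * q (x + t *\<^sub>R a)" using sublin_hom[OF q] c by simp
        finally have 1: "r (c *\<^sub>R x) \<le> c * q (x + t *\<^sub>R a) - (c * t) * q a" .
        have "c * s = c * q (x + t *\<^sub>R a) - (c * t) * q a" using t(2) by (simp add: right_diff_distrib)
        then have "r (c *\<^sub>R x) \<le> c * s" using 1 by linarith
        then show ?thesis using c by (simp add: pos_divide_le_eq mult.commute)
      qed
      then have "r (c *\<^sub>R x) / c \<le> r x" by (rule rge)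
      then show "r (c *\<^sub>R x) \<le> c * r x" using c by (simp add: pos_divide_le_eq mult.commute)
    next
      have "r 0 \<le> q 0" using rle[OF ne] .
      moreover have "- q (- 0) \<le> r 0" by (rule rge) (rule lb)
      ultimately show "r 0 = 0" using sublin_0[OF q] by simp
    qed
    moreover have "\<forall>x. r x \<le> q x" using rle[OF ne] by blast
    ultimately have "r = q" by (rule minq)
    moreover have "q (x + 1 *\<^sub>R a) - 1 * q a \<in> S x" unfolding S_def by (rule CollectI, rule exI[of _ 1]) simp
    ultimately have "q x \<le> q (x + a) - q a" using rle by fastforce
    then show ?thesis by simp
  qed
  have add: "q (x + y) = q x + q y" for x y using sup[of x y] sublin_add[OF q, of x y] by simp
  have neg: "q (- x) = - q x" for x using add[of x "-x"] sublin_0[OF q] by simp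
  show ?thesis
  proof (rule linearI)
    fix x y show "q (x + y) = q x + q y" by (rule add)
  next
    fix c :: real and x
    show "q (c *\<^sub>R x) = c *\<^sub>R q x"
    proof (cases "c \<ge> 0")
      case True then show ?thesis using sublin_hom[OF q] by simp
    next
      case False
      then have "q (c *\<^sub>R x) = q (- ((- c) *\<^sub>R x))" by simp
      also have "\<dots> = - ((-c) * q x)" using neg sublin_hom[OF q, of "-c"] False by simp
      finally show ?thesis by simp
    qed
  qed
qed


definition sepi :: "('v \<Rightarrow> real) \<Rightarrow> ('v \<times> real) set" where
  "sepi q = {(x, t). q x < t}"

lemma sepi_le: assumes "sepi q1 \<subseteq> sepi q2" shows "q2 x \<le> q1 x"
proof (rule ccontr)
  assume "\<not> q2 x \<le> q1 x"
  then have "(x, (q1 x + q2 x) / 2) \<in> sepi q1" "(x, (q1 x + q2 x) / 2) \<notin> sepi q2"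
    by (auto simp: sepi_def)
  with assms show False by blast
qed

lemma sepi_mono: "(\<And>x. q2 x \<le> q1 x) \<Longrightarrow> sepi q1 \<subseteq> sepi q2"
  unfolding sepi_def by (auto intro: le_less_trans)

lemma sublin_lb: "sublin q \<Longrightarrow> (\<forall>x. q x \<le> p x) \<Longrightarrow> - p (- x) \<le> q x"
  using sublin_neg[of q x] by (metis neg_le_iff_le order_trans)

lemma exists_minimal_sublin:
  fixes p :: "'v::real_vector \<Rightarrow> real"
  assumes p: "sublin p"
  shows "\<exists>q. sublin q \<and> (\<forall>x. q x \<le> p x) \<and> (\<forall>r. sublin r \<and> (\<forall>x. r x \<le> q x) \<longrightarrow> r = q)"
proof -
  define A where "A = {sepi q | q. sublin q \<and> (\<forall>x. q x \<le> p x)}"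
  have "\<forall>C\<in>chains A. \<exists>U\<in>A. \<forall>X\<in>C. X \<subseteq> U"
  proof
    fix C assume C: "C \<in> chains A"
    show "\<exists>U\<in>A. \<forall>X\<in>C. X \<subseteq> U"
    proof (cases "C = {}")
      case True
      have "sepi p \<in> A" using p unfolding A_def by blast
      then show ?thesis using True by blast
    next
      case False
      define Q where "Q = {q. sublin q \<and> (\<forall>x. q x \<le> p x) \<and> sepi q \<in> C}"
      have CA: "C \<subseteq> A" and ch: "\<And>X Y. X \<in> C \<Longrightarrow> Y \<in> C \<Longrightarrow> X \<subseteq> Y \<or> Y \<subseteq> X"
        using C unfolding chains_def chain_subset_def by blast+
      have QC: "\<forall>X\<in>C. \<exists>q\<in>Q. X = sepi q"
      proof
        fix X assume X: "X \<in> C"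
        then have "X \<in> A" using CA by blast
        then obtain q where "X = sepi q" "sublin q" "\<forall>x. q x \<le> p x" unfolding A_def by blast
        then show "\<exists>q\<in>Q. X = sepi q" using X unfolding Q_def by blast
      qed
      then have Qne: "Q \<noteq> {}" using False by auto
      have Qch: "(\<forall>x. q2 x \<le> q1 x) \<or> (\<forall>x. q1 x \<le> q2 x)" if h12: "q1 \<in> Q" "q2 \<in> Q" for q1 q2
      proof -
        have "sepi q1 \<in> C" "sepi q2 \<in> C" using h12 unfolding Q_def by auto
        then have "sepi q1 \<subseteq> sepi q2 \<or> sepi q2 \<subseteq> sepi q1" by (rule ch)
        then show ?thesis
        proof
          assume a: "sepi q1 \<subseteq> sepi q2" show ?thesis using sepi_le[OF a] by blast
        next
          assume a: "sepi q2 \<subseteq> sepi q1" show ?thesis using sepi_le[OF a] by blast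
        qed
      qed
      define qC where "qC x = Inf ((\<lambda>q. q x) ` Q)" for x
      have Qs: "sublin q" "\<forall>x. q x \<le> p x" if "q \<in> Q" for q using that unfolding Q_def by auto
      have bdd: "bdd_below ((\<lambda>q. q x) ` Q)" for x
      proof (rule bdd_belowI)
        fix y assume "y \<in> (\<lambda>q. q x) ` Q"
        then obtain q where "q \<in> Q" "y = q x" by auto
        then show "- p (- x) \<le> y" using sublin_lb[OF Qs(1) Qs(2)] by simp
      qed
      have qCle: "qC x \<le> q x" if "q \<in> Q" for q x
        unfolding qC_def by (rule cInf_lower) (use that bdd in auto)
      have qCge: "c \<le> qC x" if "\<And>q. q \<in> Q \<Longrightarrow> c \<le> q x" for c x
        unfolding qC_def by (rule cInf_greatest) (use Qne that in auto)
      have "sublin qC" unfolding sublin_def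
      proof (intro conjI allI impI)
        fix x y
        have "qC (x + y) - q2 y \<le> q1 x" if h12: "q1 \<in> Q" "q2 \<in> Q" for q1 q2
        proof -
          have "\<exists>q. q \<in> Q \<and> q x \<le> q1 x \<and> q y \<le> q2 y"
            using Qch[OF h12]
          proof
            assume "\<forall>x. q2 x \<le> q1 x" then show ?thesis using h12 by (meson order_refl)
          next
            assume "\<forall>x. q1 x \<le> q2 x" then show ?thesis using h12 by (meson order_refl)
          qed
          then obtain q where q: "q \<in> Q" "q x \<le> q1 x" "q y \<le> q2 y" by blast
          show ?thesis using qCle[OF q(1), of "x + y"] sublin_add[OF Qs(1)[OF q(1)], of x y] q by simp
        qed
        then have h1: "qC (x + y) - q2 y \<le> qC x" if "q2 \<in> Q" for q2 using that by (intro qCge) auto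
        have "qC (x + y) - qC x \<le> q2 y" if "q2 \<in> Q" for q2 using h1[OF that] by linarith
        then have "qC (x + y) - qC x \<le> qC y" by (intro qCge) auto
        then show "qC (x + y) \<le> qC x + qC y" by simp
      next
        fix c :: real and x assume c: "c > 0"
        have "qC (c *\<^sub>R x) / c \<le> q x" if "q \<in> Q" for q
        proof -
          have "qC (c *\<^sub>R x) \<le> c * q x"
            using qCle[OF that, of "c *\<^sub>R x"] sublin_hom[OF Qs(1)[OF that], of c x] c by simp
          then show ?thesis using c by (simp add: pos_divide_le_eq mult.commute)
        qed
        then have "qC (c *\<^sub>R x) / c \<le> qC x" by (intro qCge) auto
        then show "qC (c *\<^sub>R x) \<le> c * qC x" using c by (simp add: pos_divide_le_eq mult.commute)
      next
        obtain q where "q \<in> Q" using Qne by auto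
        then have "qC 0 \<le> 0" using qCle[of q 0] sublin_0[OF Qs(1)[OF \<open>q \<in> Q\<close>]] by simp
        moreover have "0 \<le> qC 0" by (rule qCge) (simp add: sublin_0[OF Qs(1)])
        ultimately show "qC 0 = 0" by simp
      qed
      moreover have "\<forall>x. qC x \<le> p x"
      proof
        fix x obtain q where "q \<in> Q" using Qne by auto
        then show "qC x \<le> p x" using qCle[of q x] Qs(2)[of q] by (meson order_trans)
      qed
      ultimately have "sepi qC \<in> A" unfolding A_def by blast
      moreover have "\<forall>X\<in>C. X \<subseteq> sepi qC"
      proof
        fix X assume "X \<in> C"
        then obtain q where "q \<in> Q" "X = sepi q" using QC by blast
        then show "X \<subseteq> sepi qC" using sepi_mono[of qC q] qCle[of q] by blast
      qed
      ultimately show ?thesis by blast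
    qed
  qed
  from Zorn_Lemma2[OF this] obtain M where M: "M \<in> A" "\<forall>X\<in>A. M \<subseteq> X \<longrightarrow> X = M" by blast
  then obtain q where q: "M = sepi q" "sublin q" "\<forall>x. q x \<le> p x" unfolding A_def by blast
  show ?thesis
  proof (intro exI conjI allI impI)
    show "sublin q" "q x \<le> p x" for x using q by auto
    fix r assume r: "sublin r \<and> (\<forall>x. r x \<le> q x)"
    have "\<forall>x. r x \<le> p x" using r q(3) order_trans by blast
    then have "sepi r \<in> A" using r unfolding A_def by blast
    moreover have "M \<subseteq> sepi r" using q(1) r sepi_mono[of r q] by blast
    ultimately have "sepi r = sepi q" using M q(1) by blast
    then have "r x = q x" for x using sepi_le[of r q x] sepi_le[of q r x] by simp
    then show "r = q" by (rule ext)
  qed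
qed

lemma hahn_banach_sublin:
  fixes p :: "'v::real_vector \<Rightarrow> real"
  assumes "sublin p"
  shows "\<exists>F. linear F \<and> (\<forall>x. F x \<le> p x)"
proof -
  obtain q where q: "sublin q" "\<forall>x. q x \<le> p x" "\<forall>r. sublin r \<and> (\<forall>x. r x \<le> q x) \<longrightarrow> r = q"
    using exists_minimal_sublin[OF assms] by blast
  have "linear q" by (rule minimal_sublin_linear[OF q(1)]) (use q(3) in blast)
  with q(2) show ?thesis by blast
qed


lemma sublin_nonneg: assumes "sublin P" "\<forall>x. P (- x) = P x" shows "0 \<le> P x"
  using sublin_add[OF assms(1), of x "-x"] sublin_0[OF assms(1)] assms(2) by simp

lemma hahn_banach_point:
  fixes p :: "'v::real_vector \<Rightarrow> real"
  assumes p: "sublin p"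
  shows "\<exists>F. linear F \<and> (\<forall>x. F x \<le> p x) \<and> p z \<le> F z"
proof -
  define g where "g x t = p (x - t *\<^sub>R z) + t * p z" for x t
  define p' where "p' x = Inf (range (g x))" for x
  have aux: "0 \<le> p (- (t *\<^sub>R z)) + t * p z" for t
  proof (cases "t \<ge> 0")
    case True
    have "p (- (t *\<^sub>R z)) = t * p (- z)" using sublin_hom[OF p True, of "-z"] by simp
    moreover have "0 \<le> p (- z) + p z" using sublin_neg[OF p, of z] by simp
    moreover have "0 \<le> t * (p (- z) + p z)" using True calculation(2) by simp
    ultimately show ?thesis by (simp add: distrib_left)
  next
    case False
    have "p (- (t *\<^sub>R z)) = (- t) * p z" using sublin_hom[OF p, of "-t" z] False by simp
    then show ?thesis by simp
  qed
  have lb: "- p (- x) \<le> g x t" for x t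
  proof -
    have e: "x - t *\<^sub>R z + - x = - (t *\<^sub>R z)" by simp
    have "p (- (t *\<^sub>R z)) \<le> p (x - t *\<^sub>R z) + p (- x)"
      using sublin_add[OF p, of "x - t *\<^sub>R z" "-x"] unfolding e .
    then show ?thesis using aux[of t] unfolding g_def by linarith
  qed
  have bdd: "bdd_below (range (g x))" for x unfolding bdd_below_def using lb by blast
  have ple: "p' x \<le> g x t" for x t unfolding p'_def using bdd by (simp add: cInf_lower)
  have pge: "c \<le> p' x" if "\<And>t. c \<le> g x t" for c x
    unfolding p'_def using that by (simp add: cINF_greatest)
  have "sublin p'" unfolding sublin_def
  proof (intro conjI allI impI)
    fix x y
    have "p' (x + y) - g y t \<le> g x s" for s t
    proof -
      have "p' (x + y) \<le> g (x + y) (s + t)" by (rule ple)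
      also have "\<dots> \<le> g x s + g y t"
        using sublin_add[OF p, of "x - s *\<^sub>R z" "y - t *\<^sub>R z"] unfolding g_def
        by (simp add: algebra_simps)
      finally show ?thesis by simp
    qed
    then have h1: "p' (x + y) - g y t \<le> p' x" for t by (intro pge)
    have "p' (x + y) - p' x \<le> g y t" for t using h1[of t] by linarith
    then have "p' (x + y) - p' x \<le> p' y" by (intro pge)
    then show "p' (x + y) \<le> p' x + p' y" by simp
  next
    fix c :: real and x assume c: "c > 0"
    have "p' (c *\<^sub>R x) / c \<le> g x t" for t
    proof -
      have "p' (c *\<^sub>R x) \<le> g (c *\<^sub>R x) (c * t)" by (rule ple)
      also have "g (c *\<^sub>R x) (c * t) = c * g x t"
        using sublin_hom[OF p, of c "x - t *\<^sub>R z"] c unfolding g_def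
        by (simp add: algebra_simps scaleR_diff_right)
      finally show ?thesis using c by (simp add: pos_divide_le_eq mult.commute)
    qed
    then have "p' (c *\<^sub>R x) / c \<le> p' x" by (intro pge)
    then show "p' (c *\<^sub>R x) \<le> c * p' x" using c by (simp add: pos_divide_le_eq mult.commute)
  next
    have "p' 0 \<le> g 0 0" by (rule ple)
    moreover have "- p (- 0) \<le> p' 0" by (intro pge lb)
    ultimately show "p' 0 = 0" using sublin_0[OF p] unfolding g_def by simp
  qed
  then obtain F where F: "linear F" "\<forall>x. F x \<le> p' x" using hahn_banach_sublin by blast
  have "p' x \<le> p x" for x using ple[of x 0] unfolding g_def by simp
  moreover have "F (- z) \<le> - p z" using F(2)[rule_format, of "- z"] ple[of "- z" "-1"] sublin_0[OF p] unfolding g_def by simp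
  then have "p z \<le> F z" using linear_neg[OF F(1), of z] by simp
  ultimately show ?thesis using F by (meson order_trans)
qed


lemma sep_point:
  fixes P :: "'v::real_vector \<Rightarrow> real" and K :: "'v set"
  assumes P: "sublin P" and Psym: "\<forall>x. P (- x) = P x" and K: "convex K" "k0 \<in> K"
    and e: "e > 0" and far: "\<forall>k\<in>K. e \<le> P (k - x0)"
  shows "\<exists>F. linear F \<and> (\<forall>x. F x \<le> P x) \<and> (\<exists>m>0. \<forall>k\<in>K. F k + m \<le> F x0)"
proof -
  have P0: "0 \<le> P x" for x by (rule sublin_nonneg[OF P Psym])
  define D where "D = {k - x0 + v | k v. k \<in> K \<and> P v < e/2}"
  have Dintro: "k - x0 + v \<in> D" if "k \<in> K" "P v < e/2" for k v
    unfolding D_def using that by blast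
  have Dconv: "u *\<^sub>R d1 + (1 - u) *\<^sub>R d2 \<in> D" if d: "d1 \<in> D" "d2 \<in> D" and u: "0 \<le> u" "u \<le> 1" for d1 d2 u
  proof -
    obtain k1 v1 where 1: "d1 = k1 - x0 + v1" "k1 \<in> K" "P v1 < e/2" using d(1) unfolding D_def by blast
    obtain k2 v2 where 2: "d2 = k2 - x0 + v2" "k2 \<in> K" "P v2 < e/2" using d(2) unfolding D_def by blast
    have kK: "u *\<^sub>R k1 + (1 - u) *\<^sub>R k2 \<in> K" by (rule convexD[OF K(1) 1(2) 2(2)]) (use u in auto)
    define M where "M = max (P v1) (P v2)"
    have "P (u *\<^sub>R v1 + (1 - u) *\<^sub>R v2) \<le> P (u *\<^sub>R v1) + P ((1 - u) *\<^sub>R v2)" by (rule sublin_add[OF P])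
    also have "\<dots> = u * P v1 + (1 - u) * P v2" using sublin_hom[OF P, of u] sublin_hom[OF P, of "1 - u"] u by simp
    also have "\<dots> \<le> u * M + (1 - u) * M"
      by (intro add_mono mult_left_mono) (use u in \<open>auto simp: M_def\<close>)
    also have "\<dots> = M" by (simp add: algebra_simps)
    also have "M < e/2" using 1 2 unfolding M_def by simp
    finally have vP: "P (u *\<^sub>R v1 + (1 - u) *\<^sub>R v2) < e/2" .
    have eq: "u *\<^sub>R d1 + (1 - u) *\<^sub>R d2 = (u *\<^sub>R k1 + (1 - u) *\<^sub>R k2) - x0 + (u *\<^sub>R v1 + (1 - u) *\<^sub>R v2)"
      unfolding 1(1) 2(1) by (simp add: algebra_simps)
    show ?thesis unfolding eq by (rule Dintro[OF kK vP])
  qed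
  have Dbig: "e/2 \<le> P d" if hd: "d \<in> D" for d
  proof -
    obtain k v where kv: "d = k - x0 + v" "k \<in> K" "P v < e/2" using hd unfolding D_def by blast
    have "P (k - x0) \<le> P d + P (- v)" using sublin_add[OF P, of d "- v"] kv(1) by simp
    then show ?thesis using far kv Psym by force
  qed
  define d0 where "d0 = k0 - x0"
  have d0D: "d0 \<in> D" using Dintro[OF K(2), of 0] sublin_0[OF P] e unfolding d0_def by simp
  define W where "W z = {P (z - s *\<^sub>R d) | s d. 0 \<le> s \<and> d \<in> D}" for z
  define p where "p z = Inf (W z)" for z
  have Wmem: "P (z - s *\<^sub>R d) \<in> W z" if "0 \<le> s" "d \<in> D" for z s d
    unfolding W_def using that by blast
  have Wne: "W z \<noteq> {}" for z using Wmem[OF order_refl d0D] by blast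
  have Wbdd: "bdd_below (W z)" for z
  proof (rule bdd_belowI)
    fix y assume "y \<in> W z" then obtain s d where "y = P (z - s *\<^sub>R d)" unfolding W_def by blast
    then show "0 \<le> y" using P0 by simp
  qed
  have ple: "p z \<le> P (z - s *\<^sub>R d)" if "0 \<le> s" "d \<in> D" for z s d
    unfolding p_def by (rule cInf_lower[OF Wmem[OF that] Wbdd])
  have pge: "c \<le> p z" if "\<And>s d. 0 \<le> s \<Longrightarrow> d \<in> D \<Longrightarrow> c \<le> P (z - s *\<^sub>R d)" for c z
    unfolding p_def
  proof (rule cInf_greatest[OF Wne])
    fix y assume "y \<in> W z" then obtain s d where "y = P (z - s *\<^sub>R d)" "0 \<le> s" "d \<in> D" unfolding W_def by blast
    then show "c \<le> y" using that by simp
  qed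
  have "sublin p" unfolding sublin_def
  proof (intro conjI allI impI)
    fix x y
    have key: "p (x + y) \<le> P (x - s1 *\<^sub>R d1) + P (y - s2 *\<^sub>R d2)"
      if h: "0 \<le> s1" "d1 \<in> D" "0 \<le> s2" "d2 \<in> D" for s1 d1 s2 d2
    proof (cases "s1 + s2 = 0")
      case True
      then have "s1 = 0" "s2 = 0" using h by auto
      then show ?thesis using ple[OF order_refl d0D, of "x + y"] sublin_add[OF P, of x y] by simp
    next
      case False
      define S where "S = s1 + s2"
      have S: "S > 0" using False h unfolding S_def by auto
      define d where "d = (s1 / S) *\<^sub>R d1 + (1 - s1 / S) *\<^sub>R d2"
      have dD: "d \<in> D" unfolding d_def by (rule Dconv[OF h(2) h(4)]) (use S h in \<open>auto simp: S_def\<close>)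
      have "1 - s1 / S = s2 / S" using S unfolding S_def by (simp add: field_simps)
      then have "S *\<^sub>R d = s1 *\<^sub>R d1 + s2 *\<^sub>R d2" unfolding d_def using S by (simp add: scaleR_add_right)
      then have eq: "x + y - S *\<^sub>R d = (x - s1 *\<^sub>R d1) + (y - s2 *\<^sub>R d2)" by (simp add: algebra_simps)
      have "p (x + y) \<le> P (x + y - S *\<^sub>R d)" using ple[of S d "x + y"] S dD by simp
      then have "p (x + y) \<le> P ((x - s1 *\<^sub>R d1) + (y - s2 *\<^sub>R d2))" unfolding eq .
      also have "\<dots> \<le> P (x - s1 *\<^sub>R d1) + P (y - s2 *\<^sub>R d2)" by (rule sublin_add[OF P])
      finally show ?thesis .
    qed
    have h1: "p (x + y) - P (y - s2 *\<^sub>R d2) \<le> p x" if "0 \<le> s2" "d2 \<in> D" for s2 d2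
    proof (rule pge)
      fix s1 :: real and d1 assume "0 \<le> s1" "d1 \<in> D"
      then show "p (x + y) - P (y - s2 *\<^sub>R d2) \<le> P (x - s1 *\<^sub>R d1)" using key[of s1 d1 s2 d2] that by simp
    qed
    have "p (x + y) - p x \<le> p y"
    proof (rule pge)
      fix s2 :: real and d2 assume "0 \<le> s2" "d2 \<in> D"
      then show "p (x + y) - p x \<le> P (y - s2 *\<^sub>R d2)" using h1[of s2 d2] by simp
    qed
    then show "p (x + y) \<le> p x + p y" by simp
  next
    fix c :: real and x assume c: "c > 0"
    have "p (c *\<^sub>R x) / c \<le> p x"
    proof (rule pge)
      fix s :: real and d assume sd: "0 \<le> s" "d \<in> D"
      have "p (c *\<^sub>R x) \<le> P (c *\<^sub>R x - (c * s) *\<^sub>R d)" using ple[of "c * s" d] sd c by simp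
      also have "c *\<^sub>R x - (c * s) *\<^sub>R d = c *\<^sub>R (x - s *\<^sub>R d)" by (simp add: algebra_simps)
      also have "P (c *\<^sub>R (x - s *\<^sub>R d)) = c * P (x - s *\<^sub>R d)" using sublin_hom[OF P] c by simp
      finally show "p (c *\<^sub>R x) / c \<le> P (x - s *\<^sub>R d)" using c by (simp add: pos_divide_le_eq mult.commute)
    qed
    then show "p (c *\<^sub>R x) \<le> c * p x" using c by (simp add: pos_divide_le_eq mult.commute)
  next
    have "p 0 \<le> P (0 - 0 *\<^sub>R d0)" by (rule ple[OF order_refl d0D])
    moreover have "0 \<le> p 0" by (rule pge) (rule P0)
    ultimately show "p 0 = 0" using sublin_0[OF P] by simp
  qed
  define z where "z = x0 - k0"
  obtain F where F: "linear F" "\<forall>x. F x \<le> p x" "p z \<le> F z"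
    using hahn_banach_point[OF \<open>sublin p\<close>] by blast
  have pP: "p x \<le> P x" for x using ple[OF order_refl d0D, of x] by simp
  have pz: "e/2 \<le> p z"
  proof (rule pge)
    fix s :: real and d assume sd: "0 \<le> s" "d \<in> D"
    define d' where "d' = (1 / (1 + s)) *\<^sub>R d0 + (1 - 1 / (1 + s)) *\<^sub>R d"
    have d'D: "d' \<in> D" unfolding d'_def by (rule Dconv[OF d0D sd(2)]) (use sd in auto)
    have "1 - 1 / (1 + s) = s / (1 + s)" using sd by (simp add: field_simps)
    then have e1: "(1 + s) *\<^sub>R d' = d0 + s *\<^sub>R d" unfolding d'_def using sd by (simp add: scaleR_add_right)
    have e2: "z - s *\<^sub>R d = - (d0 + s *\<^sub>R d)" unfolding z_def d0_def by (simp add: algebra_simps)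
    have "P (z - s *\<^sub>R d) = P (- (d0 + s *\<^sub>R d))" by (simp only: e2)
    also have "\<dots> = P (d0 + s *\<^sub>R d)" using Psym by blast
    also have "\<dots> = P ((1 + s) *\<^sub>R d')" by (simp only: e1)
    finally have "P (z - s *\<^sub>R d) = P ((1 + s) *\<^sub>R d')" .
    also have "\<dots> = (1 + s) * P d'" using sublin_hom[OF P, of "1 + s"] sd by simp
    finally have "P (z - s *\<^sub>R d) = P d' + s * P d'" by (simp add: algebra_simps)
    moreover have "0 \<le> s * P d'" using sd P0 by simp
    ultimately show "e/2 \<le> P (z - s *\<^sub>R d)" using Dbig[OF d'D] by linarith
  qed
  define c where "c = e / (4 * (P z + 1))"
  have Pz: "0 \<le> P z" by (rule P0)
  have c: "c > 0" unfolding c_def using e Pz by simp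
  have "c * P z < e/2"
  proof -
    have "c * P z \<le> c * (P z + 1)" using c by simp
    also have "\<dots> = e / 4" unfolding c_def using Pz by (simp add: field_simps)
    finally show ?thesis using e by simp
  qed
  then have Pv: "P (c *\<^sub>R z) < e/2" using sublin_hom[OF P, of c z] c by simp
  have "F k + c * (e/2) \<le> F x0" if k: "k \<in> K" for k
  proof -
    have dD: "k - x0 + c *\<^sub>R z \<in> D" by (rule Dintro[OF k Pv])
    have "F (k - x0 + c *\<^sub>R z) \<le> p (k - x0 + c *\<^sub>R z)" using F(2) by blast
    also have "\<dots> \<le> P ((k - x0 + c *\<^sub>R z) - 1 *\<^sub>R (k - x0 + c *\<^sub>R z))" by (rule ple[OF _ dD]) simp
    also have "\<dots> = 0" using sublin_0[OF P] by simp
    finally have "F (k - x0 + c *\<^sub>R z) \<le> 0" .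
    moreover have "F (k - x0 + c *\<^sub>R z) = F k - F x0 + c * F z"
      using F(1) by (simp add: linear_add linear_diff linear_scale)
    moreover have "c * (e/2) \<le> c * F z" using c pz F(3) by simp
    ultimately show ?thesis by linarith
  qed
  moreover have "c * (e/2) > 0" using c e by simp
  moreover have "\<forall>x. F x \<le> P x" using F(2) pP order_trans by blast
  ultimately show ?thesis using F(1) by blast
qed




lemma lin_aux: "(B::real) \<le> (A - r) / 2 \<Longrightarrow> - B \<le> C \<Longrightarrow> A + C \<le> r \<Longrightarrow> 0 < A - r \<Longrightarrow> False"
  by (simp add: field_simps)

lemma small_t_le:
  fixes A Q r :: real
  assumes "\<And>t. 0 < t \<Longrightarrow> t \<le> 1 \<Longrightarrow> A + t * Q \<le> r"
  shows "A \<le> r"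
proof (rule ccontr)
  assume "\<not> A \<le> r"
  then have d: "A - r > 0" by simp
  define t where "t = min 1 ((A - r) / (2 * (\<bar>Q\<bar> + 1)))"
  have t: "0 < t" "t \<le> 1" unfolding t_def using d by auto
  have "t * \<bar>Q\<bar> \<le> ((A - r) / (2 * (\<bar>Q\<bar> + 1))) * \<bar>Q\<bar>"
    unfolding t_def by (intro mult_right_mono) auto
  also have "\<dots> \<le> ((A - r) / (2 * (\<bar>Q\<bar> + 1))) * (\<bar>Q\<bar> + 1)"
    using d by (intro mult_left_mono) auto
  also have "\<dots> = (A - r) / 2" by (simp add: field_simps)
  finally have "t * \<bar>Q\<bar> \<le> (A - r) / 2" .
  moreover have "- (t * \<bar>Q\<bar>) \<le> t * Q" using t mult_left_mono[of "- \<bar>Q\<bar>" Q t] by simp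
  ultimately show False using assms[OF t] d by (rule lin_aux)
qed

lemma fitz_ineq:
  assumes h: "h \<in> fitzpatrick_family T" and aT: "(a, as) \<in> T" and hr: "h (x, xs) \<le> ereal r"
  shows "blinfun_apply as x + blinfun_apply xs a - blinfun_apply as a \<le> r"
proof -
  have cvx: "convex {(z, t::real). h z \<le> ereal t}" and lb: "\<And>x xs. h (x, xs) \<ge> ereal (pairing x xs)"
    and onT: "h (a, as) = ereal (pairing a as)"
    using h aT unfolding fitzpatrick_family_def convex_ext_def by auto
  define A where "A = blinfun_apply as x + blinfun_apply xs a - blinfun_apply as a"
  define Q where "Q = blinfun_apply xs x - A"
  have "A + t * Q \<le> r" if t: "0 < t" "t \<le> 1" for t
  proof -
    have m1: "((a, as), blinfun_apply as a) \<in> {(z, t::real). h z \<le> ereal t}"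
      using onT by (simp add: pairing_def)
    have m2: "((x, xs), r) \<in> {(z, t::real). h z \<le> ereal t}" using hr by simp
    have "(1 - t) *\<^sub>R ((a, as), blinfun_apply as a) + t *\<^sub>R ((x, xs), r) \<in> {(z, t::real). h z \<le> ereal t}"
      by (rule convexD[OF cvx m1 m2]) (use t in auto)
    then have hz: "h ((1 - t) *\<^sub>R a + t *\<^sub>R x, (1 - t) *\<^sub>R as + t *\<^sub>R xs) \<le> ereal ((1 - t) * blinfun_apply as a + t * r)"
      by simp
    have "ereal (pairing ((1 - t) *\<^sub>R a + t *\<^sub>R x) ((1 - t) *\<^sub>R as + t *\<^sub>R xs)) \<le> ereal ((1 - t) * blinfun_apply as a + t * r)"
      using lb hz order_trans by blast
    then have ineq: "pairing ((1 - t) *\<^sub>R a + t *\<^sub>R x) ((1 - t) *\<^sub>R as + t *\<^sub>R xs) \<le> (1 - t) * blinfun_apply as a + t * r"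
      by simp
    have pe: "pairing ((1 - t) *\<^sub>R a + t *\<^sub>R x) ((1 - t) *\<^sub>R as + t *\<^sub>R xs) =
      (1 - t) * (1 - t) * blinfun_apply as a + (1 - t) * t * blinfun_apply as x
      + t * (1 - t) * blinfun_apply xs a + t * t * blinfun_apply xs x"
      unfolding pairing_def blinfun.add_left blinfun.scaleR_left blinfun.add_right blinfun.scaleR_right
      by (simp add: algebra_simps)
    have "t * (A + t * Q - r) = pairing ((1 - t) *\<^sub>R a + t *\<^sub>R x) ((1 - t) *\<^sub>R as + t *\<^sub>R xs)
      - ((1 - t) * blinfun_apply as a + t * r)"
      unfolding pe A_def Q_def by (simp add: algebra_simps)
    also have "\<dots> \<le> 0" using ineq by simp
    finally have "t * (A + t * Q - r) \<le> 0" .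
    then have "A + t * Q - r \<le> 0" using t by (simp add: mult_le_0_iff)
    then show ?thesis by simp
  qed
  then have "A \<le> r" by (rule small_t_le)
  then show ?thesis unfolding A_def .
qed

lemma pairing_swap: "pairing (a - x) (as - xs) = pairing (x - a) (xs - as)"
  unfolding pairing_def by (simp add: blinfun.diff_left blinfun.diff_right)

lemma maximal_in:
  assumes mm: "maximal_monotone T" and rel: "\<And>a as. (a, as) \<in> T \<Longrightarrow> 0 \<le> pairing (x - a) (xs - as)"
  shows "(x, xs) \<in> T"
proof -
  have mT: "monotone_op T" using mm unfolding maximal_monotone_def by blast
  have "monotone_op (insert (x, xs) T)"
    unfolding monotone_op_def
  proof (intro ballI, clarify)
    fix y ys z zs assume y: "(y, ys) \<in> insert (x, xs) T" and z: "(z, zs) \<in> insert (x, xs) T"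
    show "0 \<le> pairing (y - z) (ys - zs)"
    proof (cases "(y, ys) = (x, xs)")
      case True
      show ?thesis
      proof (cases "(z, zs) = (x, xs)")
        case True2: True
        then show ?thesis using True by (simp add: pairing_def)
      next
        case False
        then have "(z, zs) \<in> T" using z False by blast
        then show ?thesis using rel True by simp
      qed
    next
      case False
      then have yT: "(y, ys) \<in> T" using y False by blast
      show ?thesis
      proof (cases "(z, zs) = (x, xs)")
        case True
        have "0 \<le> pairing (x - y) (xs - ys)" using rel[OF yT] .
        then show ?thesis using True pairing_swap[of y x ys xs] by simp
      next
        case False
        then have "(z, zs) \<in> T" using z False by blast
        then show ?thesis using mT yT unfolding monotone_op_def by auto
      qed
    qed
  qed
  then have "insert (x, xs) T = T" using mm unfolding maximal_monotone_def by blast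
  then show ?thesis by blast
qed

lemma maximal_nonempty:
  assumes mm: "maximal_monotone (T :: ('a::real_normed_vector \<times> ('a \<Rightarrow>\<^sub>L real)) set)"
  shows "T \<noteq> {}"
proof
  assume T: "T = {}"
  have "monotone_op {(0::'a, 0::'a \<Rightarrow>\<^sub>L real)}" unfolding monotone_op_def by (simp add: pairing_def)
  then have "{(0::'a, 0::'a \<Rightarrow>\<^sub>L real)} = T" using mm T unfolding maximal_monotone_def by blast
  then show False using T by simp
qed

lemma effdom_finite:
  assumes h: "h \<in> fitzpatrick_family T" and z: "z \<in> effdom h"
  shows "h z = ereal (real_of_ereal (h z))"
proof -
  obtain x xs where zz: "z = (x, xs)" by (cases z)
  have "h z \<ge> ereal (pairing x xs)" using h zz unfolding fitzpatrick_family_def by auto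
  moreover have "h z < \<infinity>" using z unfolding effdom_def by simp
  ultimately have "\<bar>h z\<bar> \<noteq> \<infinity>" by auto
  then show ?thesis by (simp add: ereal_real)
qed

lemma convex_effdom:
  assumes h: "h \<in> fitzpatrick_family T"
  shows "convex (effdom h)"
proof (rule convexI)
  have cvx: "convex {(z, t::real). h z \<le> ereal t}" using h unfolding fitzpatrick_family_def convex_ext_def by auto
  fix z1 z2 and u v :: real assume z: "z1 \<in> effdom h" "z2 \<in> effdom h" and uv: "0 \<le> u" "0 \<le> v" "u + v = 1"
  define r1 where "r1 = real_of_ereal (h z1)"
  define r2 where "r2 = real_of_ereal (h z2)"
  have m1: "(z1, r1) \<in> {(z, t::real). h z \<le> ereal t}" using effdom_finite[OF h z(1)] unfolding r1_def by simp
  have m2: "(z2, r2) \<in> {(z, t::real). h z \<le> ereal t}" using effdom_finite[OF h z(2)] unfolding r2_def by simp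
  have "u *\<^sub>R (z1, r1) + v *\<^sub>R (z2, r2) \<in> {(z, t::real). h z \<le> ereal t}" by (rule convexD[OF cvx m1 m2 uv])
  then have "h (u *\<^sub>R z1 + v *\<^sub>R z2) \<le> ereal (u * r1 + v * r2)" by simp
  then show "u *\<^sub>R z1 + v *\<^sub>R z2 \<in> effdom h" unfolding effdom_def by (auto simp: le_less_trans)
qed

lemma T_effdom:
  assumes h: "h \<in> fitzpatrick_family T" shows "T \<subseteq> effdom h"
proof
  fix z assume "z \<in> T"
  then obtain x xs where "z = (x, xs)" "(x, xs) \<in> T" by (cases z) auto
  then have "h z = ereal (pairing x xs)" using h unfolding fitzpatrick_family_def by auto
  then show "z \<in> effdom h" unfolding effdom_def by simp
qed


lemma eval_rep:
  assumes "finite Y"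
  shows "\<forall>F::('a::real_normed_vector \<Rightarrow>\<^sub>L real) \<Rightarrow> real. linear F \<and> (\<forall>z. (\<forall>y\<in>Y. blinfun_apply z y = 0) \<longrightarrow> F z = 0) \<longrightarrow> (\<exists>w. \<forall>z. F z = blinfun_apply z w)"
  using assms
proof (induction Y rule: finite_induct)
  case empty
  show ?case
  proof (intro allI impI)
    fix F :: "('a \<Rightarrow>\<^sub>L real) \<Rightarrow> real"
    assume "linear F \<and> (\<forall>z. (\<forall>y\<in>{}. blinfun_apply z y = 0) \<longrightarrow> F z = 0)"
    then have "F z = 0" for z by auto
    then show "\<exists>w. \<forall>z. F z = blinfun_apply z w" by (intro exI[of _ 0]) simp
  qed
next
  case (insert y0 Y)
  show ?case
  proof (intro allI impI)
    fix F :: "('a \<Rightarrow>\<^sub>L real) \<Rightarrow> real"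
    assume FF: "linear F \<and> (\<forall>z. (\<forall>y\<in>insert y0 Y. blinfun_apply z y = 0) \<longrightarrow> F z = 0)"
    then have lin: "linear F" and van: "\<And>z. (\<forall>y\<in>insert y0 Y. blinfun_apply z y = 0) \<Longrightarrow> F z = 0" by auto
    show "\<exists>w. \<forall>z. F z = blinfun_apply z w"
    proof (cases "\<forall>z. (\<forall>y\<in>Y. blinfun_apply z y = 0) \<longrightarrow> F z = 0")
      case True then show ?thesis using insert.IH lin by blast
    next
      case False
      then obtain z0 where z0: "\<forall>y\<in>Y. blinfun_apply z0 y = 0" "F z0 \<noteq> 0" by blast
      have z0y0: "blinfun_apply z0 y0 \<noteq> 0" using van[of z0] z0 by auto
      define c where "c = blinfun_apply z0 y0"
      define G where "G z = F z - (blinfun_apply z y0 / c) * F z0" for z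
      have linG: "linear G"
      proof (rule linearI)
        fix z1 z2 show "G (z1 + z2) = G z1 + G z2"
          unfolding G_def by (simp add: linear_add[OF lin] blinfun.add_left add_divide_distrib algebra_simps)
      next
        fix r :: real and z show "G (r *\<^sub>R z) = r *\<^sub>R G z"
          unfolding G_def by (simp add: linear_scale[OF lin] blinfun.scaleR_left algebra_simps)
      qed
      have "G z = 0" if zY: "\<forall>y\<in>Y. blinfun_apply z y = 0" for z
      proof -
        define z' where "z' = z - (blinfun_apply z y0 / c) *\<^sub>R z0"
        have "\<forall>y\<in>insert y0 Y. blinfun_apply z' y = 0"
          using zY z0 z0y0 unfolding z'_def c_def by (simp add: blinfun.diff_left blinfun.scaleR_left)
        then have "F z' = 0" by (rule van)
        moreover have "F z' = G z" unfolding z'_def G_def by (simp add: linear_diff[OF lin] linear_scale[OF lin])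
        ultimately show ?thesis by simp
      qed
      then obtain w' where w': "\<forall>z. G z = blinfun_apply z w'" using insert.IH linG by blast
      show ?thesis
      proof (rule exI[of _ "w' + (F z0 / c) *\<^sub>R y0"], rule allI)
        fix z
        have "F z = G z + (blinfun_apply z y0 / c) * F z0" unfolding G_def by simp
        also have "\<dots> = blinfun_apply z (w' + (F z0 / c) *\<^sub>R y0)"
          using w' by (simp add: blinfun.add_right blinfun.scaleR_right)
        finally show "F z = blinfun_apply z (w' + (F z0 / c) *\<^sub>R y0)" .
      qed
    qed
  qed
qed


lemma sublin_norm: "sublin (norm :: 'a::real_normed_vector \<Rightarrow> real)"
  unfolding sublin_def by (simp add: norm_triangle_ineq)

lemma part1:
  fixes T :: "('a::banach \<times> ('a \<Rightarrow>\<^sub>L real)) set"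
  assumes mm: "maximal_monotone T" and h: "h \<in> fitzpatrick_family T"
  shows "closure (fst ` effdom h) = closure (convex hull (fst ` T))"
proof -
  let ?K = "convex hull (fst ` T)"
  have cvx: "convex (fst ` effdom h)"
    by (rule convex_linear_image[OF bounded_linear.linear[OF bounded_linear_fst] convex_effdom[OF h]])
  have sub: "?K \<subseteq> fst ` effdom h"
    by (rule hull_minimal) (use T_effdom[OF h] cvx in auto)
  have sub2: "fst ` effdom h \<subseteq> closure ?K"
  proof
    fix x0 assume "x0 \<in> fst ` effdom h"
    then obtain xs0 where z: "(x0, xs0) \<in> effdom h" by force
    define r where "r = real_of_ereal (h (x0, xs0))"
    have "h (x0, xs0) = ereal r" unfolding r_def by (rule effdom_finite[OF h z])
    then have hr: "h (x0, xs0) \<le> ereal r" by simp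
    show "x0 \<in> closure ?K"
    proof (rule ccontr)
      assume nx: "x0 \<notin> closure ?K"
      have op: "open (- closure ?K)" by (simp add: open_Compl)
      obtain e where e: "e > 0" "ball x0 e \<subseteq> - closure ?K"
        using op nx unfolding open_contains_ball by (meson ComplI)
      have far: "\<forall>k\<in>?K. e \<le> norm (k - x0)"
      proof
        fix k assume "k \<in> ?K"
        then have "k \<in> closure ?K" using closure_subset by blast
        then have "k \<notin> ball x0 e" using e(2) by blast
        then show "e \<le> norm (k - x0)" by (simp add: dist_norm norm_minus_commute)
      qed
      obtain a0 as0 where a0: "(a0, as0) \<in> T" using maximal_nonempty[OF mm] by auto
      have fTK: "fst ` T \<subseteq> ?K" by (rule hull_subset)
      have "a0 \<in> fst ` T" by (rule image_eqI[of _ fst "(a0, as0)"]) (simp_all add: a0)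
      then have k0: "a0 \<in> ?K" using fTK by blast
      have Psym: "\<forall>x::'a. norm (- x) = norm x" by simp
      obtain F where F: "linear F" "\<forall>x. F x \<le> norm x" and "\<exists>m>0. \<forall>k\<in>?K. F k + m \<le> F x0"
        using sep_point[OF sublin_norm Psym convex_convex_hull k0 e(1) far] by blast
      then obtain m where m: "m > 0" "\<forall>k\<in>?K. F k + m \<le> F x0" by blast
      have bl: "bounded_linear F"
      proof (rule bounded_linear_intro[where K=1])
        show "F (x + y) = F x + F y" for x y by (rule linear_add[OF F(1)])
        show "F (r *\<^sub>R x) = r *\<^sub>R F x" for r x by (simp add: linear_scale[OF F(1)])
        show "norm (F x) \<le> norm x * 1" for x
        proof -
          have "F x \<le> norm x" using F(2) by blast
          moreover have "- F x \<le> norm x" using F(2)[rule_format, of "-x"] linear_neg[OF F(1), of x] by simp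
          ultimately show ?thesis by simp
        qed
      qed
      define fs where "fs = Blinfun F"
      have fs: "blinfun_apply fs = F" unfolding fs_def by (rule bounded_linear_Blinfun_apply[OF bl])
      define lam where "lam = \<bar>r - blinfun_apply xs0 x0\<bar> / m"
      have lam: "lam \<ge> 0" "lam * m = \<bar>r - blinfun_apply xs0 x0\<bar>" unfolding lam_def using m(1) by auto
      have "(x0, xs0 + lam *\<^sub>R fs) \<in> T"
      proof (rule maximal_in[OF mm])
        fix a as assume aT: "(a, as) \<in> T"
        have fi: "blinfun_apply as x0 + blinfun_apply xs0 a - blinfun_apply as a \<le> r" by (rule fitz_ineq[OF h aT hr])
        have "a \<in> fst ` T" by (rule image_eqI[of _ fst "(a, as)"]) (simp_all add: aT)
        then have "a \<in> ?K" using fTK by blast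
        then have Fa: "F a + m \<le> F x0" using m(2) by blast
        have lm: "lam * m \<le> lam * (F x0 - F a)" using Fa lam(1) by (intro mult_left_mono) auto
        have eq: "pairing (x0 - a) (xs0 + lam *\<^sub>R fs - as) =
          blinfun_apply xs0 x0 - blinfun_apply xs0 a + lam * (F x0 - F a) - blinfun_apply as x0 + blinfun_apply as a"
          unfolding pairing_def blinfun.diff_left blinfun.add_left blinfun.scaleR_left blinfun.diff_right fs
          by (simp add: algebra_simps)
        have "r - blinfun_apply xs0 x0 \<le> lam * m" using lam(2) by simp
        then show "0 \<le> pairing (x0 - a) (xs0 + lam *\<^sub>R fs - as)" unfolding eq using fi lm by linarith
      qed
      then have "x0 \<in> fst ` T" by (intro image_eqI[of _ fst "(x0, xs0 + lam *\<^sub>R fs)"]) simp_all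
      then have "x0 \<in> closure ?K" using fTK closure_subset[of ?K] by blast
      with nx show False by blast
    qed
  qed
  show ?thesis
  proof
    show "closure (fst ` effdom h) \<subseteq> closure ?K" by (rule closure_minimal[OF sub2 closed_closure])
    show "closure ?K \<subseteq> closure (fst ` effdom h)" by (rule closure_mono[OF sub])
  qed
qed


lemma part2:
  fixes T :: "('a::banach \<times> ('a \<Rightarrow>\<^sub>L real)) set"
  assumes mm: "maximal_monotone T" and h: "h \<in> fitzpatrick_family T"
  shows "weak_star_closure (snd ` effdom h) = weak_star_closure (convex hull (snd ` T))"
proof -
  let ?K = "convex hull (snd ` T)"
  let ?W = "weak_star_topology :: ('a \<Rightarrow>\<^sub>L real) topology"
  have top: "topspace ?W = UNIV" unfolding weak_star_topology_def topspace_pullback_topology by simp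
  have cvx: "convex (snd ` effdom h)"
    by (rule convex_linear_image[OF bounded_linear.linear[OF bounded_linear_snd] convex_effdom[OF h]])
  have sub: "?K \<subseteq> snd ` effdom h"
    by (rule hull_minimal) (use T_effdom[OF h] cvx in auto)
  have sTK: "snd ` T \<subseteq> ?K" by (rule hull_subset)
  have sub2: "snd ` effdom h \<subseteq> ?W closure_of ?K"
  proof
    fix xs0 assume "xs0 \<in> snd ` effdom h"
    then obtain x0 where z: "(x0, xs0) \<in> effdom h" by force
    define r where "r = real_of_ereal (h (x0, xs0))"
    have "h (x0, xs0) = ereal r" unfolding r_def by (rule effdom_finite[OF h z])
    then have hr: "h (x0, xs0) \<le> ereal r" by simp
    show "xs0 \<in> ?W closure_of ?K"
    proof (rule ccontr)
      assume nx: "xs0 \<notin> ?W closure_of ?K"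
      then have "\<exists>U. xs0 \<in> U \<and> openin ?W U \<and> \<not> (\<exists>y. y \<in> ?K \<and> y \<in> U)"
        unfolding in_closure_of top by blast
      then obtain U where U: "xs0 \<in> U" "openin ?W U" "\<And>y. y \<in> ?K \<Longrightarrow> y \<notin> U" by blast
      obtain V where V: "openin euclidean V" "U = blinfun_apply -` V \<inter> UNIV"
        using U(2) unfolding weak_star_topology_def openin_pullback_topology by blast
      have fV: "blinfun_apply xs0 \<in> V" using U(1) V(2) by blast
      have "openin (product_topology (\<lambda>i. euclidean) UNIV) V" using V(1) by (simp add: euclidean_product_topology)
      from product_topology_open_contains_basis[OF this fV]
      obtain X where X: "blinfun_apply xs0 \<in> (\<Pi>\<^sub>E i\<in>UNIV. X i)" "\<And>i. openin euclidean (X i)"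
          "finite {i. X i \<noteq> topspace euclidean}" "(\<Pi>\<^sub>E i\<in>UNIV. X i) \<subseteq> V"
        by blast
      define Y where "Y = {i. X i \<noteq> UNIV}"
      have finY: "finite Y" using X(3) unfolding Y_def by simp
      have Xi: "blinfun_apply xs0 i \<in> X i" for i using X(1) by (simp add: PiE_UNIV_domain Pi_iff)
      have ex: "\<forall>i. \<exists>\<epsilon>. \<epsilon> > 0 \<and> ball (blinfun_apply xs0 i) \<epsilon> \<subseteq> X i"
      proof
        fix i
        have "open (X i)" using X(2)[of i] by (simp only: open_openin)
        then have "\<forall>x\<in>X i. \<exists>\<epsilon>>0. ball x \<epsilon> \<subseteq> X i" unfolding open_contains_ball .
        then have "\<exists>\<epsilon>>0. ball (blinfun_apply xs0 i) \<epsilon> \<subseteq> X i" using Xi[of i] by (rule bspec)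
        then show "\<exists>\<epsilon>. \<epsilon> > 0 \<and> ball (blinfun_apply xs0 i) \<epsilon> \<subseteq> X i" by simp
      qed
      obtain eps where eps': "\<forall>i. eps i > 0 \<and> ball (blinfun_apply xs0 i) (eps i) \<subseteq> X i"
        using choice[OF ex] by blast
      have eps: "\<And>i. eps i > 0" "\<And>i. ball (blinfun_apply xs0 i) (eps i) \<subseteq> X i" using eps' by auto
      define e where "e = Min (insert 1 (eps ` Y))"
      have e: "e > 0" unfolding e_def using finY eps(1) by (simp add: Min_gr_iff)
      have eY: "e \<le> eps i" if "i \<in> Y" for i unfolding e_def using finY that by (intro Min_le) auto
      define P where "P z = (\<Sum>y\<in>Y. \<bar>blinfun_apply z y\<bar>)" for z :: "'a \<Rightarrow>\<^sub>L real"
      have sP: "sublin P" unfolding sublin_def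
      proof (intro conjI allI impI)
        fix x y :: "'a \<Rightarrow>\<^sub>L real"
        have "P (x + y) \<le> (\<Sum>i\<in>Y. \<bar>blinfun_apply x i\<bar> + \<bar>blinfun_apply y i\<bar>)"
          unfolding P_def by (rule sum_mono) (simp add: blinfun.add_left abs_triangle_ineq)
        also have "\<dots> = P x + P y" unfolding P_def by (rule sum.distrib)
        finally show "P (x + y) \<le> P x + P y" .
      next
        fix c :: real and x :: "'a \<Rightarrow>\<^sub>L real" assume c: "c > 0"
        show "P (c *\<^sub>R x) \<le> c * P x" unfolding P_def using c
          by (simp add: blinfun.scaleR_left abs_mult sum_distrib_left)
      next
        show "P 0 = 0" unfolding P_def by simp
      qed
      have Psym: "\<forall>x. P (- x) = P x" unfolding P_def by (simp add: blinfun.minus_left)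
      have far: "\<forall>k\<in>?K. e \<le> P (k - xs0)"
      proof
        fix k assume kK: "k \<in> ?K"
        have "k \<notin> U" using U(3)[OF kK] .
        then have "blinfun_apply k \<notin> V" using V(2) by blast
        then have "blinfun_apply k \<notin> (\<Pi>\<^sub>E i\<in>UNIV. X i)" using X(4) by blast
        then obtain i where i: "blinfun_apply k i \<notin> X i" by (auto simp: PiE_UNIV_domain)
        then have iY: "i \<in> Y" unfolding Y_def by auto
        have "blinfun_apply k i \<notin> ball (blinfun_apply xs0 i) (eps i)" using i eps(2)[of i] by blast
        then have "eps i \<le> \<bar>blinfun_apply k i - blinfun_apply xs0 i\<bar>" by (simp add: dist_real_def abs_minus_commute)
        also have "\<dots> = \<bar>blinfun_apply (k - xs0) i\<bar>" by (simp add: blinfun.diff_left)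
        also have "\<dots> \<le> P (k - xs0)" unfolding P_def by (rule member_le_sum) (use iY finY in auto)
        finally show "e \<le> P (k - xs0)" using eY[OF iY] by simp
      qed
      obtain a0 as0 where a0: "(a0, as0) \<in> T" using maximal_nonempty[OF mm] by auto
      have "as0 \<in> snd ` T" by (rule image_eqI[of _ snd "(a0, as0)"]) (simp_all add: a0)
      then have k0: "as0 \<in> ?K" using sTK by blast
      obtain F where F: "linear F" "\<forall>x. F x \<le> P x" and "\<exists>m>0. \<forall>k\<in>?K. F k + m \<le> F xs0"
        using sep_point[OF sP Psym convex_convex_hull k0 e far] by blast
      then obtain m where m: "m > 0" "\<forall>k\<in>?K. F k + m \<le> F xs0" by blast
      have van: "\<forall>z. (\<forall>y\<in>Y. blinfun_apply z y = 0) \<longrightarrow> F z = 0"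
      proof (intro allI impI)
        fix z :: "'a \<Rightarrow>\<^sub>L real" assume zY: "\<forall>y\<in>Y. blinfun_apply z y = 0"
        then have "P z = 0" "P (- z) = 0" unfolding P_def by (simp_all add: blinfun.minus_left)
        then have "F z \<le> 0" "F (- z) \<le> 0" using F(2) by (metis, metis)
        then show "F z = 0" using linear_neg[OF F(1), of z] by simp
      qed
      obtain w where w: "\<forall>z. F z = blinfun_apply z w" using eval_rep[OF finY] F(1) van by blast
      define lam where "lam = \<bar>r - blinfun_apply xs0 x0\<bar> / m"
      have lam: "lam \<ge> 0" "lam * m = \<bar>r - blinfun_apply xs0 x0\<bar>" unfolding lam_def using m(1) by auto
      have "(x0 + lam *\<^sub>R w, xs0) \<in> T"
      proof (rule maximal_in[OF mm])
        fix a as assume aT: "(a, as) \<in> T"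
        have fi: "blinfun_apply as x0 + blinfun_apply xs0 a - blinfun_apply as a \<le> r" by (rule fitz_ineq[OF h aT hr])
        have "as \<in> snd ` T" by (rule image_eqI[of _ snd "(a, as)"]) (simp_all add: aT)
        then have "as \<in> ?K" using sTK by blast
        then have Fa: "F as + m \<le> F xs0" using m(2) by blast
        have lm: "lam * m \<le> lam * (F xs0 - F as)" using Fa lam(1) by (intro mult_left_mono) auto
        have eq: "pairing (x0 + lam *\<^sub>R w - a) (xs0 - as) =
          blinfun_apply xs0 x0 - blinfun_apply xs0 a + lam * (F xs0 - F as) - blinfun_apply as x0 + blinfun_apply as a"
          unfolding pairing_def blinfun.diff_left blinfun.add_right blinfun.scaleR_right blinfun.diff_right
          by (simp add: w algebra_simps)
        have "r - blinfun_apply xs0 x0 \<le> lam * m" using lam(2) by simp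
        then show "0 \<le> pairing (x0 + lam *\<^sub>R w - a) (xs0 - as)" unfolding eq using fi lm by linarith
      qed
      then have "xs0 \<in> snd ` T" by (intro image_eqI[of _ snd "(x0 + lam *\<^sub>R w, xs0)"]) simp_all
      then have "xs0 \<in> ?K" using sTK by blast
      then have "F xs0 + m \<le> F xs0" using m(2) by blast
      with m(1) show False by simp
    qed
  qed
  show ?thesis unfolding weak_star_closure_def
  proof
    show "?W closure_of (snd ` effdom h) \<subseteq> ?W closure_of ?K"
      using closure_of_mono[OF sub2, where X="?W"] by simp
    show "?W closure_of ?K \<subseteq> ?W closure_of (snd ` effdom h)" by (rule closure_of_mono[OF sub])
  qed
qed

theorem lemma4p1:
  fixes T :: "('a::banach \<times> ('a \<Rightarrow>\<^sub>L real)) set"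
    and h :: "('a \<times> ('a \<Rightarrow>\<^sub>L real)) \<Rightarrow> ereal"
  assumes "maximal_monotone T"
    and "h \<in> fitzpatrick_family T"
  shows "closure (fst ` effdom h) = closure (convex hull (fst ` T)) \<and>
         weak_star_closure (snd ` effdom h) = weak_star_closure (convex hull (snd ` T))"
  using part1[OF assms] part2[OF assms] by blast


end
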